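(* Let $S=S(k_0,\dots,k_{m-1},k_m)$ with $k_0\geq0$ and $k_i\geq1$ for $1\leq i\leq m$. Then: (i) if $S\neq\varepsilon$, $P_C(S)=S(k_0,\dots,k_{m-1},k_m-1)$ and $P_D(S)=S(k_0,\dots,k_{m-2},k_{m-1}-1)$; (ii) $N(S)=2^{|S|+1}+\sum_{i=1}^{m}(-1)^i\,2^{k_i+k_{i+1}+\cdots+k_m}-c$, where $c=2$ if $m$ is even and $c=1$ if $m$ is odd; that is, $N(S)=2^{k_0+\cdots+k_m+1}-2^{k_1+\cdots+k_m}+2^{k_2+\cdots+k_m}-\cdots+2^{k_m}-2$ if $m$ is even and $N(S)=2^{k_0+\cdots+k_m+1}-2^{k_1+\cdots+k_m}+2^{k_2+\cdots+k_m}-\cdots-2^{k_m}-1$ if $m$ is odd; (iii) $r(S)=2\left(1-2^{-k_0}+2^{-k_0-k_1}-\cdots+(-1)^m2^{-k_0-k_1-\cdots-k_{m-1}}+(-1)^{m+1}2^{-|S|-1}\right)$, and equivalently $r(S)=2\sum_{i=0}^{m+1}(-1)^i2^{-e_i}+(-1)^{m+2}2^{-|S|}$ where $e_i=\sum_{j=0}^{i-1}k_j$ (so $e_0=0$).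
   Context: $\{L,R\}^*$ is the free monoid on $L,R$ (strings), with empty string $\varepsilon$; $|S|$ is the number of symbols of $S$. For $k_0\geq 0$, $k_1,\dots,k_m\geq 1$, $S(k_0,\dots,k_m)$ is the string $R^{k_0}L^{k_1}R^{k_2}\cdots$ with $m+1$ alternating blocks (last block $R^{k_m}$ if $m$ even, $L^{k_m}$ if $m$ odd); every string has exactly one such representation, $\varepsilon=S(0)$; note $|S|=k_0+\cdots+k_m$. Blocks with exponent $0$ are omitted; by convention $S(-1)$ denotes the generalized string $R^{-1}$, and when $m=0$ the expression $S(k_0,\dots,k_{m-2},k_{m-1}-1)$ denotes $L^{-1}$. Parents: $P_L(S)=SR^{-1}$ and $P_R(S)=SL^{-1}$, evaluated recursively with the rules $LL^{-1}=\varepsilon$, $RR^{-1}=\varepsilon$, $LR^{-1}=R^{-1}$, $RL^{-1}=L^{-1}$ (and $\varepsilon R^{-1}=R^{-1}$, $\varepsilon L^{-1}=L^{-1}$). Position: $N\colon\{L,R\}^*\to\mathbb{N}$ is defined by $N(\varepsilon)=0$, $N(SL)=2N(S)+1$, $N(SR)=2N(S)+2$. For $S\neq\varepsilon$ with $n=N(S)$, the close parent is $P_C(S)=P_L(S)$ if $n$ is even and $P_R(S)$ if $n$ is odd; the distant parent is $P_D(S)=P_L(S)$ if $n$ is odd and $P_R(S)$ if $n$ is even. The function $r$ is defined by $r(\varepsilon)=1$, $r(SL)=r(S)-2^{-|SL|}$, $r(SR)=r(S)+2^{-|SR|}$. *)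

theory Defs
  imports Complex_Main
begin

datatype sym = L | R

type_synonym str = "sym list"

text \<open>Generalized strings: ordinary strings, or the formal inverse of a single symbol
  (Inv R stands for R^{-1}, Inv L for L^{-1}).\<close>
datatype gstr = Str "sym list" | Inv sym

definition Sblk :: "nat list \<Rightarrow> str" where
  "Sblk ks = concat (map (\<lambda>i. replicate (ks ! i) (if even i then R else L)) [0..<length ks])"

text \<open>Generalized S with integer exponents, using the paper's conventions:
  S(-1) = R^{-1}, and the empty argument list (arising from S(k_0,...,k_{m-2},k_{m-1}-1)
  when m = 0) denotes L^{-1}.\<close>
definition Sgen :: "int list \<Rightarrow> gstr" where
  "Sgen ks = (if ks = [] then Inv L else if ks = [-1] then Inv R else Str (Sblk (map nat ks)))"

definition declast :: "int list \<Rightarrow> int list" where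
  "declast ks = butlast ks @ [last ks - 1]"

text \<open>Evaluate S x^{-1} with rules LL^{-1}=e, RR^{-1}=e, LR^{-1}=R^{-1}, RL^{-1}=L^{-1},
  e x^{-1} = x^{-1}. The list argument is the reversed string.\<close>
fun cancel_rev :: "sym \<Rightarrow> sym list \<Rightarrow> gstr" where
  "cancel_rev x [] = Inv x"
| "cancel_rev x (y # ys) = (if y = x then Str (rev ys) else cancel_rev x ys)"

definition PL :: "str \<Rightarrow> gstr" where "PL S = cancel_rev R (rev S)"
definition PR :: "str \<Rightarrow> gstr" where "PR S = cancel_rev L (rev S)"

definition N :: "str \<Rightarrow> nat" where
  "N S = foldl (\<lambda>n x. 2 * n + (case x of L \<Rightarrow> 1 | R \<Rightarrow> 2)) 0 S"

definition PC :: "str \<Rightarrow> gstr" where "PC S = (if even (N S) then PL S else PR S)"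
definition PD :: "str \<Rightarrow> gstr" where "PD S = (if odd (N S) then PL S else PR S)"

text \<open>r(e)=1, r(SL)=r(S)-2^{-|SL|}, r(SR)=r(S)+2^{-|SR|}; argument is the reversed string.\<close>
fun r_rev :: "sym list \<Rightarrow> real" where
  "r_rev [] = 1"
| "r_rev (x # ys) = r_rev ys + (case x of L \<Rightarrow> -1 | R \<Rightarrow> 1) * (1/2) ^ (length ys + 1)"

definition r :: "str \<Rightarrow> real" where "r S = r_rev (rev S)"

end

theory Submission imports Defs begin

definition bs :: "nat \<Rightarrow> sym" where "bs i = (if even i then R else L)"

lemma Sblk_snoc: "Sblk (xs @ [k]) = Sblk xs @ replicate k (bs (length xs))"
  unfolding Sblk_def bs_def by (auto simp: nth_append intro!: arg_cong[where f=concat])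

lemma Sblk_Nil[simp]: "Sblk [] = []" by (simp add: Sblk_def)

lemma len_Sblk: "length (Sblk ks) = sum_list ks"
  by (induction ks rule: rev_induct) (auto simp: Sblk_snoc)

lemma N_snoc: "N (A @ [x]) = 2 * N A + (case x of L \<Rightarrow> 1 | R \<Rightarrow> 2)"
  by (simp add: N_def)

lemma N_repR: "int (N (A @ replicate k R)) = 2^k * int (N A) + 2^(k+1) - 2"
proof (induction k)
  case (Suc k)
  have eq: "A @ replicate (Suc k) R = (A @ replicate k R) @ [R]"
    by (simp add: replicate_append_same[symmetric])
  show ?case unfolding eq N_snoc using Suc by (simp add: algebra_simps)
qed simp

lemma N_repL: "int (N (A @ replicate k L)) = 2^k * int (N A) + 2^k - 1"
proof (induction k)
  case (Suc k)
  have eq: "A @ replicate (Suc k) L = (A @ replicate k L) @ [L]"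
    by (simp add: replicate_append_same[symmetric])
  show ?case unfolding eq N_snoc using Suc by (simp add: algebra_simps)
qed simp

lemma r_snoc: "r (A @ [x]) = r A + (case x of L \<Rightarrow> -1 | R \<Rightarrow> 1) * (1/2) ^ (length A + 1)"
  by (simp add: r_def)

lemma r_rep: "r (A @ replicate k x) = r A + (case x of L \<Rightarrow> -1 | R \<Rightarrow> 1) * ((1/2)^(length A) - (1/2) ^ (length A + k))"
proof (induction k)
  case (Suc k)
  have eq: "A @ replicate (Suc k) x = (A @ replicate k x) @ [x]"
    by (simp add: replicate_append_same[symmetric])
  show ?case unfolding eq r_snoc using Suc by (simp add: algebra_simps)
qed simp


lemma drop_snoc_le: "i \<le> length ys \<Longrightarrow> drop i (ys @ [k]) = drop i ys @ [k]"
  by simp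

lemma N_main: "int (N (Sblk (xs @ [k]))) = 2 ^ (sum_list (xs @ [k]) + 1)
   + (\<Sum>i=1..length xs. (-1) ^ i * 2 ^ (sum_list (drop i (xs @ [k]))))
   - (if even (length xs) then 2 else 1)"
proof (induction xs arbitrary: k rule: rev_induct)
  case Nil
  have "Sblk [k] = [] @ replicate k R" using Sblk_snoc[of "[]" k] by (simp add: bs_def)
  then show ?case using N_repR[of "[]" k] by (simp add: N_def)
next
  case (snoc a xs)
  let ?ys = "xs @ [a]"
  have s: "(\<Sum>i=1..length ?ys. (-1) ^ i * (2::int) ^ (sum_list (drop i (?ys @ [k]))))
     = 2^k * (\<Sum>i=1..length xs. (-1) ^ i * 2 ^ (sum_list (drop i ?ys))) + (-1)^(length ?ys) * 2^k"
  proof -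
    have "(\<Sum>i=1..length ?ys. (-1) ^ i * (2::int) ^ (sum_list (drop i (?ys @ [k]))))
       = (\<Sum>i=1..length ?ys. 2^k * ((-1) ^ i * 2 ^ (sum_list (drop i ?ys))))"
      by (rule sum.cong) (auto simp: power_add simp del: append_assoc)
    also have "\<dots> = 2^k * (\<Sum>i=1..length ?ys. (-1) ^ i * 2 ^ (sum_list (drop i ?ys)))"
      by (simp only: sum_distrib_left)
    also have "(\<Sum>i=1..length ?ys. (-1) ^ i * (2::int) ^ (sum_list (drop i ?ys)))
      = (\<Sum>i=1..length xs. (-1) ^ i * 2 ^ (sum_list (drop i ?ys))) + (-1)^(length ?ys)"
      by simp
    finally show ?thesis by (simp add: algebra_simps)
  qed
  define Sg where "Sg = (\<Sum>i=1..length xs. (-1) ^ i * (2::int) ^ (sum_list (drop i ?ys)))"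
  have IH: "int (N (Sblk ?ys)) = 2 ^ (sum_list ?ys + 1) + Sg - (if even (length xs) then 2 else 1)"
    using snoc[of a] unfolding Sg_def by simp
  have sb: "Sblk (?ys @ [k]) = Sblk ?ys @ replicate k (bs (length ?ys))" by (rule Sblk_snoc)
  have ls: "length (Sblk ?ys) = sum_list ?ys" by (rule len_Sblk)
  have pw: "(2::int) ^ (sum_list (?ys @ [k]) + 1) = 2^k * 2 ^ (sum_list ?ys + 1)"
    by (simp only: sum_list_append power_add) simp
  have s': "(\<Sum>i=1..length ?ys. (-1) ^ i * (2::int) ^ (sum_list (drop i (?ys @ [k]))))
     = 2^k * Sg + (-1)^(length ?ys) * 2^k" using s unfolding Sg_def .
  show ?case
  proof (cases "even (length xs)")
    case True
    then have "bs (length ?ys) = L" by (simp add: bs_def)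
    then have rep: "int (N (Sblk (?ys @ [k]))) = 2^k * int (N (Sblk ?ys)) + 2^k - 1"
      unfolding sb by (simp only: N_repL)
    show ?thesis unfolding s' rep IH pw using True by (simp add: algebra_simps)
  next
    case False
    then have "bs (length ?ys) = R" by (simp add: bs_def)
    then have rep: "int (N (Sblk (?ys @ [k]))) = 2^k * int (N (Sblk ?ys)) + 2^(k+1) - 2"
      unfolding sb by (simp only: N_repR)
    show ?thesis unfolding s' rep IH pw using False by (simp add: algebra_simps)
  qed
qed

lemma take_snoc_le: "i \<le> length ys \<Longrightarrow> take i (ys @ [k]) = take i ys"
  by simp

lemma r_main: "r (Sblk (xs @ [k])) = 2 * (\<Sum>i=0..length xs. (-1) ^ i * (1/2) ^ (sum_list (take i (xs @ [k]))))
   + (-1) ^ (length xs + 1) * (1/2) ^ (sum_list (xs @ [k]))"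
proof (induction xs arbitrary: k rule: rev_induct)
  case Nil
  have "Sblk [k] = [] @ replicate k R" using Sblk_snoc[of "[]" k] by (simp add: bs_def)
  then show ?case using r_rep[of "[]" k R] by (simp add: r_def)
next
  case (snoc a xs)
  let ?ys = "xs @ [a]"
  define Sg where "Sg = (\<Sum>i=0..length xs. (-1) ^ i * (1/2::real) ^ (sum_list (take i ?ys)))"
  have s': "(\<Sum>i=0..length ?ys. (-1) ^ i * (1/2::real) ^ (sum_list (take i (?ys @ [k]))))
     = Sg + (-1)^(length ?ys) * (1/2) ^ (sum_list ?ys)"
  proof -
    have "(\<Sum>i=0..length ?ys. (-1) ^ i * (1/2::real) ^ (sum_list (take i (?ys @ [k]))))
       = (\<Sum>i=0..length ?ys. (-1) ^ i * (1/2::real) ^ (sum_list (take i ?ys)))"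
      by (rule sum.cong) (auto simp del: append_assoc take_append simp add: take_snoc_le)
    also have "\<dots> = Sg + (-1)^(length ?ys) * (1/2) ^ (sum_list ?ys)"
      unfolding Sg_def by simp
    finally show ?thesis .
  qed
  have IH: "r (Sblk ?ys) = 2 * Sg + (-1) ^ (length xs + 1) * (1/2) ^ (sum_list ?ys)"
    using snoc[of a] unfolding Sg_def by simp
  have sb: "Sblk (?ys @ [k]) = Sblk ?ys @ replicate k (bs (length ?ys))" by (rule Sblk_snoc)
  have ls: "length (Sblk ?ys) = sum_list ?ys" by (rule len_Sblk)
  have pw: "(1/2::real) ^ (sum_list (?ys @ [k])) = (1/2) ^ (sum_list ?ys + k)"
    by (simp only: sum_list_append) simp
  have rep: "r (Sblk (?ys @ [k])) = r (Sblk ?ys) + (-1)^(length ?ys) * ((1/2)^(sum_list ?ys) - (1/2) ^ (sum_list ?ys + k))"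
    unfolding sb r_rep ls by (simp add: bs_def)
  show ?case unfolding s' rep IH pw
    by (cases "even (length xs)") (simp_all add: algebra_simps)
qed

lemma cancel_rep: "y \<noteq> x \<Longrightarrow> cancel_rev x (replicate k y @ zs) = cancel_rev x zs"
  by (induction k) auto

lemma PC_PD_last: "PC (X @ [z]) = cancel_rev z (rev (X @ [z])) \<and>
   PD (X @ [z]) = cancel_rev (if z = R then L else R) (rev (X @ [z]))"
  by (cases z) (simp_all add: PC_def PD_def PL_def PR_def N_snoc)

lemma parents:
  assumes b: "b \<ge> 1" and a: "ks \<noteq> [] \<Longrightarrow> a \<ge> 1"
  shows "PC (Sblk (ks@[a,b])) = Sgen (declast (map int (ks@[a,b]))) \<and>
         PD (Sblk (ks@[a,b])) = Sgen (declast (butlast (map int (ks@[a,b]))))"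
proof -
  define y where "y = bs (length ks)"
  define z where "z = bs (Suc (length ks))"
  have yz: "z = (if y = R then L else R)" "y \<noteq> z" unfolding y_def z_def bs_def by auto
  have S: "Sblk (ks@[a,b]) = Sblk ks @ replicate a y @ replicate b z"
    using Sblk_snoc[of "ks@[a]" b] Sblk_snoc[of ks a] unfolding y_def z_def by simp
  have rb: "replicate b z = replicate (b-1) z @ [z]" using b
    by (cases b) (simp_all add: replicate_append_same)
  define X where "X = Sblk ks @ replicate a y @ replicate (b-1) z"
  have SX: "Sblk (ks@[a,b]) = X @ [z]" unfolding S X_def rb by simp
  have revS: "rev (X @ [z]) = z # rev X" by simp
  have PC1: "PC (Sblk (ks@[a,b])) = Str X" unfolding SX using PC_PD_last[of X z] revS by simp
  have g1: "declast (map int (ks@[a,b])) = map int ks @ [int a, int b - 1]"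
    by (simp add: declast_def butlast_append)
  have g1': "map nat (map int ks @ [int a, int b - 1]) = (ks @ [a]) @ [b - 1]"
    using b by (simp add: comp_def)
  have X2: "Sblk ((ks @ [a]) @ [b - 1]) = X"
    unfolding Sblk_snoc X_def y_def z_def by simp
  have PC2: "Sgen (declast (map int (ks@[a,b]))) = Str X"
    unfolding g1 Sgen_def g1' X2 by simp
  have revS2: "rev (X @ [z]) = replicate b z @ replicate a y @ rev (Sblk ks)"
    unfolding SX[symmetric] S by simp
  have PD1: "PD (Sblk (ks@[a,b])) = cancel_rev y (replicate a y @ rev (Sblk ks))"
  proof -
    have "(if z = R then L else R) = y" using yz(1) by (cases y) auto
    then have "PD (X @ [z]) = cancel_rev y (rev (X @ [z]))" using PC_PD_last[of X z] by simp
    also have "\<dots> = cancel_rev y (replicate a y @ rev (Sblk ks))"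
      unfolding revS2 using cancel_rep[of z y b] yz(2) by simp
    finally show ?thesis unfolding SX .
  qed
  have g2: "declast (butlast (map int (ks@[a,b]))) = map int ks @ [int a - 1]"
    by (simp add: declast_def butlast_append)
  show ?thesis
  proof (cases "a = 0")
    case True
    then have "ks = []" using a by auto
    then show ?thesis using PC1 PC2 PD1 g2 True
      by (simp add: Sgen_def y_def bs_def)
  next
    case False
    have ra: "replicate a y = y # replicate (a-1) y" using False
      by (cases a) simp_all
    have "PD (Sblk (ks@[a,b])) = Str (Sblk ks @ replicate (a-1) y)"
      unfolding PD1 ra by simp
    moreover have "map nat (map int ks @ [int a - 1]) = ks @ [a - 1]"
      using False by (simp add: comp_def)
    moreover have "map int ks @ [int a - 1] \<noteq> [-1]" using False by (cases ks) auto
    ultimately show ?thesis using PC1 PC2 g2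
      by (simp add: Sgen_def Sblk_snoc y_def)
  qed
qed


theorem theorem2:
  fixes ks :: "nat list" and m :: nat
  assumes len: "length ks = m + 1"
    and pos: "\<forall>i\<in>{1..m}. ks ! i \<ge> 1"
  shows "(Sblk ks \<noteq> [] \<longrightarrow>
            PC (Sblk ks) = Sgen (declast (map int ks)) \<and>
            PD (Sblk ks) = Sgen (if m = 0 then [] else declast (butlast (map int ks))))
       \<and> int (N (Sblk ks)) =
            2 ^ (length (Sblk ks) + 1)
            + (\<Sum>i=1..m. (-1) ^ i * 2 ^ (sum_list (drop i ks)))
            - (if even m then 2 else 1)
       \<and> r (Sblk ks) =
            2 * ((\<Sum>i=0..m. (-1) ^ i * (1/2) ^ (sum_list (take i ks)))
                 + (-1) ^ (m + 1) * (1/2) ^ (length (Sblk ks) + 1))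
       \<and> r (Sblk ks) =
            2 * (\<Sum>i=0..m+1. (-1) ^ i * (1/2) ^ (sum_list (take i ks)))
            + (-1) ^ (m + 2) * (1/2) ^ (length (Sblk ks))"
proof -
  obtain xs k where ks: "ks = xs @ [k]" using len by (cases ks rule: rev_exhaust) auto
  have lxs: "length xs = m" using len ks by simp
  have LS: "length (Sblk ks) = sum_list ks" by (rule len_Sblk)
  have P2: "int (N (Sblk ks)) =
            2 ^ (length (Sblk ks) + 1)
            + (\<Sum>i=1..m. (-1) ^ i * 2 ^ (sum_list (drop i ks)))
            - (if even m then 2 else 1)"
    using N_main[of xs k] unfolding ks[symmetric] lxs LS .
  define Sg where "Sg = (\<Sum>i=0..m. (-1) ^ i * (1/2::real) ^ (sum_list (take i ks)))"
  have R0: "r (Sblk ks) = 2 * Sg + (-1) ^ (m + 1) * (1/2) ^ (length (Sblk ks))"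
    using r_main[of xs k] unfolding ks[symmetric] lxs LS Sg_def .
  have tk: "take (Suc m) ks = ks" using len by simp
  have Sg1: "(\<Sum>i=0..m+1. (-1) ^ i * (1/2::real) ^ (sum_list (take i ks)))
     = Sg + (-1)^(m+1) * (1/2) ^ (length (Sblk ks))"
    unfolding Sg_def LS by (simp add: tk)
  have P3: "r (Sblk ks) =
            2 * ((\<Sum>i=0..m. (-1) ^ i * (1/2) ^ (sum_list (take i ks)))
                 + (-1) ^ (m + 1) * (1/2) ^ (length (Sblk ks) + 1))"
    unfolding R0 Sg_def[symmetric] by (simp add: algebra_simps)
  have P4: "r (Sblk ks) =
            2 * (\<Sum>i=0..m+1. (-1) ^ i * (1/2) ^ (sum_list (take i ks)))
            + (-1) ^ (m + 2) * (1/2) ^ (length (Sblk ks))"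
    unfolding R0 Sg1 by (simp add: algebra_simps)
  have P1: "PC (Sblk ks) = Sgen (declast (map int ks)) \<and>
            PD (Sblk ks) = Sgen (if m = 0 then [] else declast (butlast (map int ks)))"
    if ne: "Sblk ks \<noteq> []"
  proof (cases m)
    case 0
    then have ks0: "ks = [k]" using ks lxs by simp
    have S0: "Sblk ks = replicate k R" using Sblk_snoc[of "[]" k] ks0 by (simp add: bs_def)
    then have k1: "k \<ge> 1" using ne by (cases k) auto
    have "replicate k R = replicate (k-1) R @ [R]" using k1
      by (cases k) (simp_all add: replicate_append_same)
    then have S1: "Sblk ks = replicate (k-1) R @ [R]" using S0 by simp
    have "PC (Sblk ks) = Str (replicate (k-1) R)"
      unfolding S1 using PC_PD_last[of "replicate (k-1) R" R] by simp
    moreover have "PD (Sblk ks) = Inv L"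
      unfolding S1 using PC_PD_last[of "replicate (k-1) R" R] cancel_rep[of R L "k-1" "[]"]
      by simp
    moreover have "Sgen (declast (map int ks)) = Str (replicate (k-1) R)"
    proof -
      have "nat (int k - 1) = k - 1" using k1 by simp
      then show ?thesis
        using k1 Sblk_snoc[of "[]" "k-1"] by (simp add: ks0 declast_def Sgen_def bs_def)
    qed
    ultimately show ?thesis using 0 by (simp add: Sgen_def)
  next
    case (Suc m')
    define ys where "ys = take m' ks"
    define a0 where "a0 = ks ! m'"
    define b0 where "b0 = ks ! m"
    have d1: "drop m' ks = ks!m' # drop (Suc m') ks"
      by (rule Cons_nth_drop_Suc[symmetric]) (use len Suc in simp)
    have d2: "drop (Suc m') ks = ks!(Suc m') # drop (Suc (Suc m')) ks"
      by (rule Cons_nth_drop_Suc[symmetric]) (use len Suc in simp)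
    have d3: "drop (Suc (Suc m')) ks = []" using len Suc by simp
    have eq: "ks = ys @ [a0, b0]"
      using append_take_drop_id[of m' ks] d1 d2 d3 Suc unfolding ys_def a0_def b0_def by simp
    have b: "b0 \<ge> 1" using pos Suc unfolding b0_def by auto
    have a: "ys \<noteq> [] \<Longrightarrow> a0 \<ge> 1"
    proof -
      assume "ys \<noteq> []"
      then have "m' \<ge> 1" unfolding ys_def using len by auto
      then show ?thesis using pos Suc unfolding a0_def by auto
    qed
    show ?thesis using Suc parents[where ks=ys and a=a0 and b=b0, OF b a, unfolded eq[symmetric]] by simp
  qed
  show ?thesis using P1 P2 P3 P4 by blast
qed

end
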